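(* Let $X$ be an infinite dimensional separable Banach space and $T:X\to X$ a continuous linear operator such that $(X,T)$ is topologically transitive. Then $(X,T)$ is thickly multi-sensitive: there exists $\delta>0$ such that $\bigcap_{i=1}^kS_T(U_i,\delta)$ is thick for every finite collection of nonempty open sets $U_1,\dots,U_k\subset X$.
   Context: $(X,T)$ is topologically transitive if $\{n\in\mathbb{Z}_+:U\cap T^{-n}V\neq\varnothing\}\neq\varnothing$ for all nonempty open $U,V\subset X$. $S_T(U,\delta)=\{n\in\mathbb{Z}_+:\exists x_1,x_2\in U,\ \|T^nx_1-T^nx_2\|>\delta\}$. A set $F\subset\mathbb{Z}_+$ is thick if it contains arbitrarily long runs of consecutive integers. *)

theory Defs
  imports "HOL-Analysis.Analysis"
begin

definition top_transitive :: "('a::topological_space \<Rightarrow> 'a) \<Rightarrow> bool" where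
  "top_transitive T \<longleftrightarrow>
     (\<forall>U V. open U \<and> U \<noteq> {} \<and> open V \<and> V \<noteq> {} \<longrightarrow>
        {n::nat. U \<inter> (T ^^ n) -` V \<noteq> {}} \<noteq> {})"

definition sens_set :: "('a::real_normed_vector \<Rightarrow> 'a) \<Rightarrow> 'a set \<Rightarrow> real \<Rightarrow> nat set" where
  "sens_set T U \<delta> = {n. \<exists>x1\<in>U. \<exists>x2\<in>U. norm ((T ^^ n) x1 - (T ^^ n) x2) > \<delta>}"

definition thick :: "nat set \<Rightarrow> bool" where
  "thick F \<longleftrightarrow> (\<forall>L. \<exists>m. {m..<m+L} \<subseteq> F)"

definition thickly_multi_sensitive :: "('a::real_normed_vector \<Rightarrow> 'a) \<Rightarrow> bool" where
  "thickly_multi_sensitive T \<longleftrightarrow>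
     (\<exists>\<delta>>0. \<forall>(k::nat) (U::nat \<Rightarrow> 'a set).
        (\<forall>i\<in>{1..k}. open (U i) \<and> U i \<noteq> {}) \<longrightarrow>
        thick (\<Inter>i\<in>{1..k}. sens_set T (U i) \<delta>))"

end

theory Submission
  imports Defs
begin

lemma bl_pow: fixes T :: "'a::real_normed_vector \<Rightarrow> 'a" shows "bounded_linear T \<Longrightarrow> bounded_linear (T ^^ n)"
proof (induction n)
  case 0 show ?case unfolding funpow_0 id_def by (rule bounded_linear_ident)
next
  case (Suc n) then show ?case by (simp add: bounded_linear_compose)
qed

lemma cont_pow: fixes T :: "'a::real_normed_vector \<Rightarrow> 'a" shows "bounded_linear T \<Longrightarrow> continuous_on UNIV (T ^^ n)"
  using bl_pow linear_continuous_on by blast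

lemma pow_nonzero:
  fixes T :: "'a::real_normed_vector \<Rightarrow> 'a"
  assumes bl: "bounded_linear T" and tr: "top_transitive T"
    and ne: "\<exists>y::'a. y \<noteq> 0"
  shows "\<exists>y. (T ^^ m) y \<noteq> 0"
proof (induction m)
  case 0 then show ?case using ne by simp
next
  case (Suc m)
  then obtain y where y: "(T ^^ m) y \<noteq> 0" by blast
  have blp: "bounded_linear (T ^^ p)" for p using bl_pow[OF bl] by blast
  have y0: "y \<noteq> 0" using y blp[of m] linear_simps(3) by (metis bounded_linear.linear linear_0)
  define U where "U = {z. (T ^^ m) z \<noteq> 0} \<inter> {z. norm z < 1}"
  define W where "W = {z. (T ^^ m) z \<noteq> 0} \<inter> {z. 1 < norm z}"
  have o1: "open {z. (T ^^ m) z \<noteq> 0}"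
    using continuous_open_vimage[of "-{0}" "T ^^ m"] linear_continuous_at[OF blp[of m]]
    by (simp add: vimage_def Collect_neg_eq[symmetric] open_Compl)
  have oU: "open U" unfolding U_def
    by (intro open_Int o1 open_Collect_less continuous_intros)
  have oW: "open W" unfolding W_def
    by (intro open_Int o1 open_Collect_less continuous_intros)
  have sc: "(T ^^ m) ((a / norm y) *\<^sub>R y) \<noteq> 0" if "a > 0" for a
    using y y0 that blp[of m] by (simp add: linear_simps(5) bounded_linear.linear)
  have "((1/2) / norm y) *\<^sub>R y \<in> U" using sc[of "1/2"] y0 unfolding U_def by simp
  hence Une: "U \<noteq> {}" by blast
  have "(2 / norm y) *\<^sub>R y \<in> W" using sc[of 2] y0 unfolding W_def by simp
  hence Wne: "W \<noteq> {}" by blast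
  obtain n where "U \<inter> (T ^^ n) -` W \<noteq> {}"
    using tr oU oW Une Wne unfolding top_transitive_def by blast
  then obtain x where x: "x \<in> U" "(T ^^ n) x \<in> W" by blast
  have "n \<noteq> 0" proof assume "n = 0" then show False using x unfolding U_def W_def by auto qed
  then have "m + n = Suc m + (n - 1)" by simp
  have "(T ^^ m) ((T ^^ n) x) \<noteq> 0" using x unfolding W_def by simp
  hence "(T ^^ (m + n)) x \<noteq> 0" by (simp add: funpow_add)
  hence "(T ^^ Suc m) ((T ^^ (n - 1)) x) \<noteq> 0"
    using \<open>m + n = Suc m + (n - 1)\<close> by (metis comp_apply funpow_add)
  then show ?case by blast
qed

theorem proposition7p2:
  fixes T :: "'a::banach \<Rightarrow> 'a"
  assumes "\<not> (\<exists>B. finite B \<and> span B = (UNIV :: 'a set))"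
    and "\<exists>D::'a set. countable D \<and> closure D = UNIV"
    and "bounded_linear T"
    and "top_transitive T"
  shows "thickly_multi_sensitive T"
proof -
  note bl = assms(3) and tr = assms(4)
  have blp: "bounded_linear (T ^^ p)" for p using bl_pow[OF bl] by blast
  have lin: "linear (T ^^ p)" for p using blp bounded_linear.linear by blast
  have ne: "\<exists>y::'a. y \<noteq> 0"
  proof (rule ccontr)
    assume "\<not> ?thesis"
    hence "span {} = (UNIV :: 'a set)" by auto
    thus False using assms(1) by blast
  qed
  have "thick (\<Inter>i\<in>{1..k}. sens_set T (U i) 1)"
    if hU: "\<forall>i\<in>{1..k}. open (U i) \<and> U i \<noteq> {}" for k and U :: "nat \<Rightarrow> 'a set"
    unfolding thick_def
  proof
    fix L
    obtain y where y: "(T ^^ L) y \<noteq> 0" using pow_nonzero[OF bl tr ne] by blast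
    have jnz: "(T ^^ j) y \<noteq> 0" if "j \<le> L" for j
    proof
      assume h: "(T ^^ j) y = 0"
      have "(T ^^ L) y = (T ^^ (L - j)) ((T ^^ j) y)"
        using that by (metis comp_apply funpow_add le_add_diff_inverse2)
      also have "\<dots> = 0" using h linear_0[OF lin] by simp
      finally show False using y by simp
    qed
    define c where "c = Min ((\<lambda>j. norm ((T ^^ j) y)) ` {..L})"
    have cpos: "c > 0" unfolding c_def using jnz by (subst Min_gr_iff) auto
    have cle: "c \<le> norm ((T ^^ j) y)" if "j \<le> L" for j
      unfolding c_def using that by (intro Min_le) auto
    define z where "z = (2 / c) *\<^sub>R y"
    define V where "V = (\<Inter>j\<in>{..<L}. {w. 1 < norm ((T ^^ j) w)})"
    have oV: "open V" unfolding V_def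
      by (intro open_INT finite_lessThan ballI open_Collect_less continuous_intros
          continuous_on_compose2[OF continuous_on_norm_id cont_pow[OF bl]]) auto
    have "z \<in> V"
    proof -
      have "1 < norm ((T ^^ j) z)" if "j < L" for j
      proof -
        have "norm ((T ^^ j) z) = (2 / c) * norm ((T ^^ j) y)"
          unfolding z_def using cpos by (simp add: linear_scale[OF lin])
        also have "\<dots> \<ge> (2 / c) * c" using cle[of j] that cpos
          by (intro mult_left_mono) auto
        finally show ?thesis using cpos by simp
      qed
      thus ?thesis unfolding V_def by auto
    qed
    hence Vne: "V \<noteq> {}" by blast
    define cc where "cc i = (SOME x. x \<in> U i)" for i
    have cc: "cc i \<in> U i" if "i \<in> {1..k}" for i
      unfolding cc_def using hU that by (metis ex_in_conv someI_ex)
    define W where "W = (\<Inter>i\<in>{1..k}. (\<lambda>x. cc i + x) -` U i)"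
    have oW: "open W" unfolding W_def
      by (intro open_INT finite_atLeastAtMost ballI continuous_open_vimage continuous_intros)
        (use hU in auto)
    have "0 \<in> W" unfolding W_def using cc by auto
    hence Wne: "W \<noteq> {}" by blast
    obtain n where "W \<inter> (T ^^ n) -` V \<noteq> {}"
      using tr oV oW Vne Wne unfolding top_transitive_def by blast
    then obtain x where x: "x \<in> W" "(T ^^ n) x \<in> V" by blast
    show "\<exists>m. {m..<m + L} \<subseteq> (\<Inter>i\<in>{1..k}. sens_set T (U i) 1)"
    proof (intro exI subsetI)
      fix p assume p: "p \<in> {n..<n + L}"
      define j where "j = p - n"
      have jL: "j < L" and pj: "p = j + n" using p unfolding j_def by auto
      have big: "1 < norm ((T ^^ p) x)"
        using x(2) jL unfolding V_def pj by (simp add: funpow_add)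
      show "p \<in> (\<Inter>i\<in>{1..k}. sens_set T (U i) 1)"
      proof
        fix i assume i: "i \<in> {1..k}"
        have "cc i + x \<in> U i" using x(1) i unfolding W_def by auto
        moreover have "(T ^^ p) (cc i + x) - (T ^^ p) (cc i) = (T ^^ p) x"
          by (simp add: linear_add[OF lin])
        ultimately show "p \<in> sens_set T (U i) 1"
          unfolding sens_set_def using cc[OF i] big by force
      qed
    qed
  qed
  thus ?thesis unfolding thickly_multi_sensitive_def by (intro exI[of _ 1]) auto
qed

end
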